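(* Let $\mathcal{K}$ be a commutative ring, $\mathcal{A}$ a (possibly noncommutative) $\mathcal{K}$-ring and $P,Q$ $\mathcal{A}$-bimodules. For each $r\ge0$, the set $\mathcal{I}_r\subset\mathrm{Hom}_{\mathcal{K}}(P,Q)$ of left $r$-order $Q$-valued differential operators on $P$ (defined in the context) is stable under all four operations $\Phi\mapsto a\Phi$, $\Phi\mapsto\Phi\bullet a$, $\Phi\mapsto\Phi a$, $\Phi\mapsto a\bullet\Phi$ ($a\in\mathcal{A}$), where $(a\Phi)(p)=a\Phi(p)$, $(\Phi\bullet a)(p)=\Phi(ap)$, $(\Phi a)(p)=\Phi(p)a$, $(a\bullet\Phi)(p)=\Phi(pa)$; that is, $\mathcal{I}_r$ carries both the left and the right $\mathcal{A}$–$\mathcal{A}^\bullet$ module structures.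
   Context: A $\mathcal{K}$-ring is a unital associative $\mathcal{K}$-algebra with $1\neq0$; an $\mathcal{A}$-bimodule is a two-sided $\mathcal{A}$-module central over the center of $\mathcal{A}$. $\mathrm{Hom}_{\mathcal{K}}(P,Q)$ is an $\mathcal{A}$-bimodule via $a\Phi$ (left) and $\Phi\bullet a$ (right) as in the claim; put $\delta_a\Phi:=a\Phi-\Phi\bullet a$. For such a bimodule $M$ its center is $\{x\in M: ax=x\bullet a\ \forall a\}$. Define $\mathcal{Z}_0$ = center of $\mathrm{Hom}_{\mathcal{K}}(P,Q)$, $\mathcal{I}_0$ = sub-bimodule (for $a\Phi$, $\Phi\bullet a$) generated by $\mathcal{Z}_0$; inductively for $r\ge1$, $\mathcal{Z}_r$ = center of $\mathrm{Hom}_{\mathcal{K}}(P,Q)/\mathcal{I}_{r-1}$, $\overline{\mathcal{Z}}_r$ = sub-bimodule generated by $\mathcal{Z}_r$, and $\mathcal{I}_r$ the sub-bimodule with $\mathcal{I}_r/\mathcal{I}_{r-1}=\overline{\mathcal{Z}}_r$. Elements of $\mathcal{I}_r$ are the left $r$-order $Q$-valued differential operators on $P$ (Lunts–Rosenberg). *)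

theory Defs
  imports Main
begin

definition ring_center :: "'a::ring_1 set" where
  "ring_center = {z. \<forall>a. z * a = a * z}"

definition K_ring :: "('k::comm_ring_1 \<Rightarrow> 'a::ring_1) \<Rightarrow> bool" where
  "K_ring iota \<longleftrightarrow>
     (1::'a) \<noteq> 0 \<and> iota 1 = 1 \<and>
     (\<forall>x y. iota (x + y) = iota x + iota y) \<and>
     (\<forall>x y. iota (x * y) = iota x * iota y) \<and>
     (\<forall>x. iota x \<in> ring_center)"

definition bimodule :: "('a::ring_1 \<Rightarrow> 'p::ab_group_add \<Rightarrow> 'p) \<Rightarrow> ('p \<Rightarrow> 'a \<Rightarrow> 'p) \<Rightarrow> bool" where
  "bimodule lm rm \<longleftrightarrow>
     (\<forall>a p q. lm a (p + q) = lm a p + lm a q) \<and>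
     (\<forall>a b p. lm (a + b) p = lm a p + lm b p) \<and>
     (\<forall>a b p. lm (a * b) p = lm a (lm b p)) \<and>
     (\<forall>p. lm 1 p = p) \<and>
     (\<forall>a p q. rm (p + q) a = rm p a + rm q a) \<and>
     (\<forall>a b p. rm p (a + b) = rm p a + rm p b) \<and>
     (\<forall>a b p. rm p (a * b) = rm (rm p a) b) \<and>
     (\<forall>p. rm p 1 = p) \<and>
     (\<forall>a b p. lm a (rm p b) = rm (lm a p) b) \<and>
     (\<forall>z\<in>ring_center. \<forall>p. lm z p = rm p z)"

definition HomK :: "('k::comm_ring_1 \<Rightarrow> 'a::ring_1) \<Rightarrow> ('a \<Rightarrow> 'p::ab_group_add \<Rightarrow> 'p)
    \<Rightarrow> ('a \<Rightarrow> 'q::ab_group_add \<Rightarrow> 'q) \<Rightarrow> ('p \<Rightarrow> 'q) set" where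
  "HomK iota lmP lmQ = {\<Phi>. (\<forall>x y. \<Phi> (x + y) = \<Phi> x + \<Phi> y) \<and>
                            (\<forall>k x. \<Phi> (lmP (iota k) x) = lmQ (iota k) (\<Phi> x))}"

definition hom_lmul :: "('a \<Rightarrow> 'q \<Rightarrow> 'q) \<Rightarrow> 'a \<Rightarrow> ('p \<Rightarrow> 'q) \<Rightarrow> ('p \<Rightarrow> 'q)" where
  "hom_lmul lmQ a \<Phi> = (\<lambda>p. lmQ a (\<Phi> p))"

definition hom_bullet :: "('a \<Rightarrow> 'p \<Rightarrow> 'p) \<Rightarrow> ('p \<Rightarrow> 'q) \<Rightarrow> 'a \<Rightarrow> ('p \<Rightarrow> 'q)" where
  "hom_bullet lmP \<Phi> a = (\<lambda>p. \<Phi> (lmP a p))"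

definition hom_delta :: "('a \<Rightarrow> 'p \<Rightarrow> 'p) \<Rightarrow> ('a \<Rightarrow> 'q::ab_group_add \<Rightarrow> 'q) \<Rightarrow> 'a
    \<Rightarrow> ('p \<Rightarrow> 'q) \<Rightarrow> ('p \<Rightarrow> 'q)" where
  "hom_delta lmP lmQ a \<Phi> = (\<lambda>p. hom_lmul lmQ a \<Phi> p - hom_bullet lmP \<Phi> a p)"

definition sub_bimodule :: "('k::comm_ring_1 \<Rightarrow> 'a::ring_1) \<Rightarrow> ('a \<Rightarrow> 'p::ab_group_add \<Rightarrow> 'p)
    \<Rightarrow> ('a \<Rightarrow> 'q::ab_group_add \<Rightarrow> 'q) \<Rightarrow> ('p \<Rightarrow> 'q) set \<Rightarrow> bool" where
  "sub_bimodule iota lmP lmQ S \<longleftrightarrow>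
     S \<subseteq> HomK iota lmP lmQ \<and> (\<lambda>_. 0) \<in> S \<and>
     (\<forall>\<Phi>\<in>S. \<forall>\<Psi>\<in>S. (\<lambda>p. \<Phi> p + \<Psi> p) \<in> S) \<and>
     (\<forall>\<Phi>\<in>S. (\<lambda>p. - \<Phi> p) \<in> S) \<and>
     (\<forall>\<Phi>\<in>S. \<forall>a. hom_lmul lmQ a \<Phi> \<in> S) \<and>
     (\<forall>\<Phi>\<in>S. \<forall>a. hom_bullet lmP \<Phi> a \<in> S)"

definition gen_sub_bimodule :: "('k::comm_ring_1 \<Rightarrow> 'a::ring_1) \<Rightarrow> ('a \<Rightarrow> 'p::ab_group_add \<Rightarrow> 'p)
    \<Rightarrow> ('a \<Rightarrow> 'q::ab_group_add \<Rightarrow> 'q) \<Rightarrow> ('p \<Rightarrow> 'q) set \<Rightarrow> ('p \<Rightarrow> 'q) set" where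
  "gen_sub_bimodule iota lmP lmQ S = \<Inter>{T. sub_bimodule iota lmP lmQ T \<and> S \<subseteq> T}"

text \<open>I_r: left r-order Q-valued differential operators on P.
  I_0 is generated by the center Z_0 of Hom_K(P,Q); I_(r+1) is the preimage of the
  sub-bimodule of Hom_K(P,Q)/I_r generated by its center, i.e. the sub-bimodule
  generated by I_r together with all \<Phi> with \<delta>_a \<Phi> \<in> I_r for all a.\<close>
primrec diff_ops :: "('k::comm_ring_1 \<Rightarrow> 'a::ring_1) \<Rightarrow> ('a \<Rightarrow> 'p::ab_group_add \<Rightarrow> 'p)
    \<Rightarrow> ('a \<Rightarrow> 'q::ab_group_add \<Rightarrow> 'q) \<Rightarrow> nat \<Rightarrow> ('p \<Rightarrow> 'q) set" where
  "diff_ops iota lmP lmQ 0 =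
     gen_sub_bimodule iota lmP lmQ
       {\<Phi> \<in> HomK iota lmP lmQ. \<forall>a. hom_delta lmP lmQ a \<Phi> = (\<lambda>_. 0)}"
| "diff_ops iota lmP lmQ (Suc r) =
     gen_sub_bimodule iota lmP lmQ
       (diff_ops iota lmP lmQ r \<union>
        {\<Phi> \<in> HomK iota lmP lmQ. \<forall>a. hom_delta lmP lmQ a \<Phi> \<in> diff_ops iota lmP lmQ r})"

end

theory Submission
  imports Defs
begin

lemma gen_sub: "S \<subseteq> gen_sub_bimodule iota lmP lmQ S"
  unfolding gen_sub_bimodule_def by blast

lemma gen_least: "sub_bimodule iota lmP lmQ T \<Longrightarrow> S \<subseteq> T \<Longrightarrow> gen_sub_bimodule iota lmP lmQ S \<subseteq> T"
  unfolding gen_sub_bimodule_def by blast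

lemma gen_lmul: "\<Phi> \<in> gen_sub_bimodule iota lmP lmQ S \<Longrightarrow> hom_lmul lmQ a \<Phi> \<in> gen_sub_bimodule iota lmP lmQ S"
  unfolding gen_sub_bimodule_def sub_bimodule_def by blast

lemma gen_bullet: "\<Phi> \<in> gen_sub_bimodule iota lmP lmQ S \<Longrightarrow> hom_bullet lmP \<Phi> a \<in> gen_sub_bimodule iota lmP lmQ S"
  unfolding gen_sub_bimodule_def sub_bimodule_def by blast

lemma rm_zero:
  fixes rm :: "'p::ab_group_add \<Rightarrow> 'a \<Rightarrow> 'p"
  assumes "\<forall>a p q. rm (p + q) a = rm p a + rm q a"
  shows "rm 0 a = 0" "rm (- x) a = - rm x a" "rm (x - y) a = rm x a - rm y a"
proof -
  have "rm (0+0) a = rm 0 a + rm 0 a" using assms by blast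
  then show z: "rm 0 a = 0" by simp
  have n: "rm (- w) a = - rm w a" for w
  proof -
    have "rm (w + - w) a = rm w a + rm (-w) a" using assms by blast
    then have "rm w a + rm (-w) a = 0" using z by simp
    then show ?thesis by (metis minus_unique)
  qed
  then show "rm (- x) a = - rm x a" .
  have "rm (x + - y) a = rm x a + rm (-y) a" using assms by blast
  then show "rm (x - y) a = rm x a - rm y a" using n by simp
qed

lemma lm_zero:
  fixes lm :: "'a \<Rightarrow> 'p::ab_group_add \<Rightarrow> 'p"
  assumes "\<forall>a p q. lm a (p + q) = lm a p + lm a q"
  shows "lm a 0 = 0" "lm a (- x) = - lm a x" "lm a (x - y) = lm a x - lm a y"
proof -
  have "lm a (0+0) = lm a 0 + lm a 0" using assms by blast
  then show z: "lm a 0 = 0" by simp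
  have n: "lm a (- w) = - lm a w" for w
  proof -
    have "lm a (w + - w) = lm a w + lm a (-w)" using assms by blast
    then have "lm a w + lm a (-w) = 0" using z by simp
    then show ?thesis by (metis minus_unique)
  qed
  then show "lm a (- x) = - lm a x" .
  have "lm a (x + - y) = lm a x + lm a (-y)" using assms by blast
  then show "lm a (x - y) = lm a x - lm a y" using n by simp
qed

lemma HomK_sub:
  assumes K: "K_ring iota" and P: "bimodule lmP rmP" and Q: "bimodule lmQ rmQ"
  shows "sub_bimodule iota lmP lmQ (HomK iota lmP lmQ)"
proof -
  have Qa: "\<forall>a p q. lmQ a (p + q) = lmQ a p + lmQ a q" using Q unfolding bimodule_def by simp
  have Qm: "\<forall>a b p. lmQ (a * b) p = lmQ a (lmQ b p)" using Q unfolding bimodule_def by simp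
  have Pa: "\<forall>a p q. lmP a (p + q) = lmP a p + lmP a q" using P unfolding bimodule_def by simp
  have Pm: "\<forall>a b p. lmP (a * b) p = lmP a (lmP b p)" using P unfolding bimodule_def by simp
  have cen: "\<And>k a. iota k * a = a * iota k" using K unfolding K_ring_def ring_center_def by blast
  have Qc: "lmQ a (lmQ (iota k) x) = lmQ (iota k) (lmQ a x)" for a k x
    by (metis Qm cen)
  have Pc: "lmP a (lmP (iota k) x) = lmP (iota k) (lmP a x)" for a k x
    by (metis Pm cen)
  have Qz: "lmQ a 0 = 0" for a using lm_zero[OF Qa] by blast
  have Qn: "lmQ a (- x) = - lmQ a x" for a x using lm_zero[OF Qa] by blast
  have Qa': "lmQ a (x + y) = lmQ a x + lmQ a y" for a x y using Qa by blast
  have Pa': "lmP a (x + y) = lmP a x + lmP a y" for a x y using Pa by blast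
  let ?H = "HomK iota lmP lmQ"
  have i0: "(\<lambda>_. 0) \<in> ?H" unfolding HomK_def by (simp add: Qz)
  have i1: "(\<lambda>p. \<Phi> p + \<Psi> p) \<in> ?H" if "\<Phi> \<in> ?H" "\<Psi> \<in> ?H" for \<Phi> \<Psi>
    using that unfolding HomK_def by (simp add: Qa' algebra_simps)
  have i2: "(\<lambda>p. - \<Phi> p) \<in> ?H" if "\<Phi> \<in> ?H" for \<Phi>
    using that unfolding HomK_def by (simp add: Qn)
  have i3: "hom_lmul lmQ a \<Phi> \<in> ?H" if "\<Phi> \<in> ?H" for \<Phi> a
  proof -
    have h1: "\<Phi> (x + y) = \<Phi> x + \<Phi> y" for x y using that unfolding HomK_def by blast
    have h2: "\<Phi> (lmP (iota k) x) = lmQ (iota k) (\<Phi> x)" for k x using that unfolding HomK_def by blast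
    have "lmQ a (\<Phi> (lmP (iota k) x)) = lmQ (iota k) (lmQ a (\<Phi> x))" for k x
      by (subst h2) (rule Qc)
    moreover have "lmQ a (\<Phi> (x + y)) = lmQ a (\<Phi> x) + lmQ a (\<Phi> y)" for x y
      by (simp only: h1 Qa')
    ultimately show ?thesis unfolding HomK_def hom_lmul_def by simp
  qed
  have i4: "hom_bullet lmP \<Phi> a \<in> ?H" if "\<Phi> \<in> ?H" for \<Phi> a
  proof -
    have h1: "\<Phi> (x + y) = \<Phi> x + \<Phi> y" for x y using that unfolding HomK_def by blast
    have h2: "\<Phi> (lmP (iota k) x) = lmQ (iota k) (\<Phi> x)" for k x using that unfolding HomK_def by blast
    have "\<Phi> (lmP a (lmP (iota k) x)) = lmQ (iota k) (\<Phi> (lmP a x))" for k x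
      by (subst Pc) (rule h2)
    moreover have "\<Phi> (lmP a (x + y)) = \<Phi> (lmP a x) + \<Phi> (lmP a y)" for x y
      by (simp only: h1 Pa')
    ultimately show ?thesis unfolding HomK_def hom_bullet_def by simp
  qed
  show ?thesis unfolding sub_bimodule_def by (simp add: i0 i1 i2 i3 i4)
qed

lemma HomK_P_add: "\<Phi> \<in> HomK iota lmP lmQ \<Longrightarrow> \<Phi> (x + y) = \<Phi> x + \<Phi> y"
  unfolding HomK_def by blast

lemma gen_HomK:
  assumes "K_ring iota" "bimodule lmP rmP" "bimodule lmQ rmQ" "S \<subseteq> HomK iota lmP lmQ"
  shows "gen_sub_bimodule iota lmP lmQ S \<subseteq> HomK iota lmP lmQ"
  using gen_least[OF HomK_sub[OF assms(1-3)] assms(4)] .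

locale opF =
  fixes iota :: "'k::comm_ring_1 \<Rightarrow> 'a::ring_1"
    and lmP :: "'a \<Rightarrow> 'p::ab_group_add \<Rightarrow> 'p" and rmP :: "'p \<Rightarrow> 'a \<Rightarrow> 'p"
    and lmQ :: "'a \<Rightarrow> 'q::ab_group_add \<Rightarrow> 'q" and rmQ :: "'q \<Rightarrow> 'a \<Rightarrow> 'q"
    and F :: "('p \<Rightarrow> 'q) \<Rightarrow> ('p \<Rightarrow> 'q)"
  assumes K: "K_ring iota" and P: "bimodule lmP rmP" and Q: "bimodule lmQ rmQ"
    and F0: "F (\<lambda>_. 0) = (\<lambda>_. 0)"
    and Fadd: "\<And>\<Phi> \<Psi>. F (\<lambda>p. \<Phi> p + \<Psi> p) = (\<lambda>p. F \<Phi> p + F \<Psi> p)"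
    and Fneg: "\<And>\<Phi>. F (\<lambda>p. - \<Phi> p) = (\<lambda>p. - F \<Phi> p)"
    and Fl: "\<And>\<Phi> b. F (hom_lmul lmQ b \<Phi>) = hom_lmul lmQ b (F \<Phi>)"
    and Fb: "\<And>\<Phi> b. F (hom_bullet lmP \<Phi> b) = hom_bullet lmP (F \<Phi>) b"
    and FH: "\<And>\<Phi>. \<Phi> \<in> HomK iota lmP lmQ \<Longrightarrow> F \<Phi> \<in> HomK iota lmP lmQ"
begin

lemma Fdelta: "F (hom_delta lmP lmQ b \<Phi>) = hom_delta lmP lmQ b (F \<Phi>)"
proof -
  have eq: "hom_delta lmP lmQ b \<Phi> = (\<lambda>p. hom_lmul lmQ b \<Phi> p + (\<lambda>p. - hom_bullet lmP \<Phi> b p) p)"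
    unfolding hom_delta_def by simp
  have "F (hom_delta lmP lmQ b \<Phi>) = (\<lambda>p. F (hom_lmul lmQ b \<Phi>) p + F (\<lambda>p. - hom_bullet lmP \<Phi> b p) p)"
    unfolding eq by (rule Fadd)
  also have "\<dots> = hom_delta lmP lmQ b (F \<Phi>)"
    unfolding Fneg Fl Fb hom_delta_def by simp
  finally show ?thesis .
qed

lemma gen_map:
  assumes S: "S \<subseteq> HomK iota lmP lmQ" and G: "sub_bimodule iota lmP lmQ G"
    and FS: "\<And>\<Phi>. \<Phi> \<in> S \<Longrightarrow> F \<Phi> \<in> G"
    and "\<Phi> \<in> gen_sub_bimodule iota lmP lmQ S"
  shows "F \<Phi> \<in> G"
proof -
  let ?T = "{\<Phi> \<in> HomK iota lmP lmQ. F \<Phi> \<in> G}"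
  have H: "sub_bimodule iota lmP lmQ (HomK iota lmP lmQ)" by (rule HomK_sub[OF K P Q])
  have HH: "?T \<subseteq> HomK iota lmP lmQ" by blast
  have Hs: "\<forall>\<Phi>\<in>HomK iota lmP lmQ. \<forall>\<Psi>\<in>HomK iota lmP lmQ. (\<lambda>p. \<Phi> p + \<Psi> p) \<in> HomK iota lmP lmQ"
       "\<forall>\<Phi>\<in>HomK iota lmP lmQ. (\<lambda>p. - \<Phi> p) \<in> HomK iota lmP lmQ"
       "\<forall>\<Phi>\<in>HomK iota lmP lmQ. \<forall>a. hom_lmul lmQ a \<Phi> \<in> HomK iota lmP lmQ"
       "\<forall>\<Phi>\<in>HomK iota lmP lmQ. \<forall>a. hom_bullet lmP \<Phi> a \<in> HomK iota lmP lmQ"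
       "(\<lambda>_. 0) \<in> HomK iota lmP lmQ"
    using H unfolding sub_bimodule_def by blast+
  have Gs: "\<forall>\<Phi>\<in>G. \<forall>\<Psi>\<in>G. (\<lambda>p. \<Phi> p + \<Psi> p) \<in> G"
       "\<forall>\<Phi>\<in>G. (\<lambda>p. - \<Phi> p) \<in> G"
       "\<forall>\<Phi>\<in>G. \<forall>a. hom_lmul lmQ a \<Phi> \<in> G"
       "\<forall>\<Phi>\<in>G. \<forall>a. hom_bullet lmP \<Phi> a \<in> G"
       "(\<lambda>_. 0) \<in> G"
    using G unfolding sub_bimodule_def by blast+
  have T: "sub_bimodule iota lmP lmQ ?T"
    unfolding sub_bimodule_def
  proof (intro conjI ballI allI HH)
    show "(\<lambda>_. 0) \<in> ?T" using Hs(5) Gs(5) F0 by simp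
    show "(\<lambda>p. \<Phi> p + \<Psi> p) \<in> ?T" if "\<Phi> \<in> ?T" "\<Psi> \<in> ?T" for \<Phi> \<Psi>
      using that Hs(1) Gs(1) by (auto simp: Fadd)
    show "(\<lambda>p. - \<Phi> p) \<in> ?T" if "\<Phi> \<in> ?T" for \<Phi>
      using that Hs(2) Gs(2) by (auto simp: Fneg)
    show "hom_lmul lmQ a \<Phi> \<in> ?T" if "\<Phi> \<in> ?T" for \<Phi> a
      using that Hs(3) Gs(3) by (auto simp: Fl)
    show "hom_bullet lmP \<Phi> a \<in> ?T" if "\<Phi> \<in> ?T" for \<Phi> a
      using that Hs(4) Gs(4) by (auto simp: Fb)
  qed
  have ST: "S \<subseteq> ?T" using S FS by blast
  have "\<Phi> \<in> ?T" using gen_least[OF T ST] assms(4) by (rule subsetD)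
  then show ?thesis by blast
qed

lemma diff_sub: "diff_ops iota lmP lmQ r \<subseteq> HomK iota lmP lmQ"
proof (induction r)
  case 0
  show ?case unfolding diff_ops.simps by (rule gen_HomK[OF K P Q]) blast
next
  case (Suc r)
  show ?case unfolding diff_ops.simps by (rule gen_HomK[OF K P Q]) (use Suc.IH in blast)
qed

lemma diff_sb: "sub_bimodule iota lmP lmQ (gen_sub_bimodule iota lmP lmQ S)"
  if "S \<subseteq> HomK iota lmP lmQ" for S
proof -
  have "gen_sub_bimodule iota lmP lmQ S \<subseteq> HomK iota lmP lmQ" using gen_HomK[OF K P Q that] .
  then show ?thesis unfolding sub_bimodule_def gen_sub_bimodule_def by blast
qed

lemma main: "\<Phi> \<in> diff_ops iota lmP lmQ r \<Longrightarrow> F \<Phi> \<in> diff_ops iota lmP lmQ r"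
proof (induction r arbitrary: \<Phi>)
  case 0
  let ?S = "{\<Phi> \<in> HomK iota lmP lmQ. \<forall>a. hom_delta lmP lmQ a \<Phi> = (\<lambda>_. 0)}"
  have S0: "?S \<subseteq> HomK iota lmP lmQ" by blast
  have FS: "\<And>\<Psi>. \<Psi> \<in> ?S \<Longrightarrow> F \<Psi> \<in> gen_sub_bimodule iota lmP lmQ ?S"
  proof -
    fix \<Psi> assume a: "\<Psi> \<in> ?S"
    then have h: "\<Psi> \<in> HomK iota lmP lmQ" "\<And>b. hom_delta lmP lmQ b \<Psi> = (\<lambda>_. 0)" by auto
    have "hom_delta lmP lmQ b (F \<Psi>) = (\<lambda>_. 0)" for b
      unfolding Fdelta[symmetric] h(2) by (rule F0)
    then have "F \<Psi> \<in> ?S" using FH[OF h(1)] by blast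
    then show "F \<Psi> \<in> gen_sub_bimodule iota lmP lmQ ?S"
      by (rule gen_sub[THEN subsetD])
  qed
  have "\<Phi> \<in> gen_sub_bimodule iota lmP lmQ ?S" using 0 unfolding diff_ops.simps .
  then have "F \<Phi> \<in> gen_sub_bimodule iota lmP lmQ ?S"
    using gen_map[OF S0 diff_sb[OF S0] FS] by blast
  then show ?case unfolding diff_ops.simps .
next
  case (Suc r)
  let ?S = "diff_ops iota lmP lmQ r \<union>
        {\<Phi> \<in> HomK iota lmP lmQ. \<forall>a. hom_delta lmP lmQ a \<Phi> \<in> diff_ops iota lmP lmQ r}"
  have S: "?S \<subseteq> HomK iota lmP lmQ" using diff_sub by blast
  have FS: "\<And>\<Psi>. \<Psi> \<in> ?S \<Longrightarrow> F \<Psi> \<in> gen_sub_bimodule iota lmP lmQ ?S"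
  proof -
    fix \<Psi> assume a: "\<Psi> \<in> ?S"
    have "F \<Psi> \<in> ?S"
    proof (cases "\<Psi> \<in> diff_ops iota lmP lmQ r")
      case True then show ?thesis using Suc.IH by blast
    next
      case False
      then have h: "\<Psi> \<in> HomK iota lmP lmQ" "\<And>b. hom_delta lmP lmQ b \<Psi> \<in> diff_ops iota lmP lmQ r"
        using a by auto
      have "hom_delta lmP lmQ b (F \<Psi>) \<in> diff_ops iota lmP lmQ r" for b
        unfolding Fdelta[symmetric] by (rule Suc.IH[OF h(2)])
      then show ?thesis using FH[OF h(1)] by blast
    qed
    then show "F \<Psi> \<in> gen_sub_bimodule iota lmP lmQ ?S"
      by (rule gen_sub[THEN subsetD])
  qed
  have "\<Phi> \<in> gen_sub_bimodule iota lmP lmQ ?S" using Suc.prems unfolding diff_ops.simps .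
  then have "F \<Phi> \<in> gen_sub_bimodule iota lmP lmQ ?S"
    using gen_map[OF S diff_sb[OF S] FS] by blast
  then show ?case unfolding diff_ops.simps .
qed

end

lemma diff_gen: "\<exists>S. diff_ops iota lmP lmQ r = gen_sub_bimodule iota lmP lmQ S"
  by (cases r) auto

theorem proposition8:
  fixes iota :: "'k::comm_ring_1 \<Rightarrow> 'a::ring_1"
    and lmP :: "'a \<Rightarrow> 'p::ab_group_add \<Rightarrow> 'p" and rmP :: "'p \<Rightarrow> 'a \<Rightarrow> 'p"
    and lmQ :: "'a \<Rightarrow> 'q::ab_group_add \<Rightarrow> 'q" and rmQ :: "'q \<Rightarrow> 'a \<Rightarrow> 'q"
    and r :: nat
  assumes "K_ring iota"
    and "bimodule lmP rmP"
    and "bimodule lmQ rmQ"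
    and "\<Phi> \<in> diff_ops iota lmP lmQ r"
  shows "(\<lambda>p. lmQ a (\<Phi> p)) \<in> diff_ops iota lmP lmQ r \<and>
         (\<lambda>p. \<Phi> (lmP a p)) \<in> diff_ops iota lmP lmQ r \<and>
         (\<lambda>p. rmQ (\<Phi> p) a) \<in> diff_ops iota lmP lmQ r \<and>
         (\<lambda>p. \<Phi> (rmP p a)) \<in> diff_ops iota lmP lmQ r"
proof -
  note K = assms(1) and P = assms(2) and Q = assms(3)
  have Qr: "\<forall>a p q. rmQ (p + q) a = rmQ p a + rmQ q a" using Q unfolding bimodule_def by blast
  have Qlr: "\<forall>a b p. lmQ a (rmQ p b) = rmQ (lmQ a p) b" using Q unfolding bimodule_def by blast
  have Plr: "\<forall>a b p. lmP a (rmP p b) = rmP (lmP a p) b" using P unfolding bimodule_def by blast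
  have cen: "\<And>k. iota k \<in> ring_center" using K unfolding K_ring_def by blast
  have Pcz: "\<forall>z\<in>ring_center. \<forall>p. lmP z p = rmP p z" using P unfolding bimodule_def by blast
  have Pr: "\<forall>a p q. rmP (p + q) a = rmP p a + rmP q a" using P unfolding bimodule_def by blast
  have 12: "(\<lambda>p. lmQ a (\<Phi> p)) \<in> diff_ops iota lmP lmQ r \<and>
         (\<lambda>p. \<Phi> (lmP a p)) \<in> diff_ops iota lmP lmQ r"
  proof -
    obtain S where S: "diff_ops iota lmP lmQ r = gen_sub_bimodule iota lmP lmQ S"
      using diff_gen by blast
    show ?thesis using gen_lmul[of \<Phi> iota lmP lmQ S a] gen_bullet[of \<Phi> iota lmP lmQ S a] assms(4)
      unfolding S hom_lmul_def hom_bullet_def by blast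
  qed
  interpret R: opF iota lmP rmP lmQ rmQ "\<lambda>\<Phi> p. rmQ (\<Phi> p) a"
  proof (unfold_locales)
    have Qr': "rmQ (x + y) b = rmQ x b + rmQ y b" for x y b using Qr by blast
    have Qlr': "lmQ c (rmQ x b) = rmQ (lmQ c x) b" for x b c using Qlr by blast
    show "(\<lambda>\<Phi> p. rmQ (\<Phi> p) a) (\<lambda>_. 0) = (\<lambda>_. 0)" using rm_zero(1)[OF Qr] by simp
    show "(\<lambda>\<Phi> p. rmQ (\<Phi> p) a) (\<lambda>p. \<Phi> p + \<Psi> p) = (\<lambda>p. (\<lambda>\<Phi> p. rmQ (\<Phi> p) a) \<Phi> p + (\<lambda>\<Phi> p. rmQ (\<Phi> p) a) \<Psi> p)" for \<Phi> \<Psi>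
      by (simp add: Qr')
    show "(\<lambda>\<Phi> p. rmQ (\<Phi> p) a) (\<lambda>p. - \<Phi> p) = (\<lambda>p. - (\<lambda>\<Phi> p. rmQ (\<Phi> p) a) \<Phi> p)" for \<Phi>
      using rm_zero(2)[OF Qr] by simp
    show "(\<lambda>\<Phi> p. rmQ (\<Phi> p) a) (hom_lmul lmQ b \<Phi>) = hom_lmul lmQ b ((\<lambda>\<Phi> p. rmQ (\<Phi> p) a) \<Phi>)" for \<Phi> b
      unfolding hom_lmul_def by (simp add: Qlr')
    show "(\<lambda>\<Phi> p. rmQ (\<Phi> p) a) (hom_bullet lmP \<Phi> b) = hom_bullet lmP ((\<lambda>\<Phi> p. rmQ (\<Phi> p) a) \<Phi>) b" for \<Phi> b
      unfolding hom_bullet_def by simp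
    show "(\<lambda>\<Phi> p. rmQ (\<Phi> p) a) \<Phi> \<in> HomK iota lmP lmQ" if "\<Phi> \<in> HomK iota lmP lmQ" for \<Phi>
      using that unfolding HomK_def by (simp add: Qr' Qlr')
  qed (rule K P Q)+
  interpret B: opF iota lmP rmP lmQ rmQ "\<lambda>\<Phi> p. \<Phi> (rmP p a)"
  proof (unfold_locales)
    show "(\<lambda>\<Phi> p. \<Phi> (rmP p a)) (hom_bullet lmP \<Phi> b) = hom_bullet lmP ((\<lambda>\<Phi> p. \<Phi> (rmP p a)) \<Phi>) b" for \<Phi> b
      unfolding hom_bullet_def by (simp add: Plr)
    show "(\<lambda>\<Phi> p. \<Phi> (rmP p a)) \<Phi> \<in> HomK iota lmP lmQ" if "\<Phi> \<in> HomK iota lmP lmQ" for \<Phi>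
    proof -
      have h1: "\<Phi> (x + y) = \<Phi> x + \<Phi> y" for x y using that unfolding HomK_def by blast
      have h2: "\<Phi> (lmP (iota k) x) = lmQ (iota k) (\<Phi> x)" for k x using that unfolding HomK_def by blast
      have "\<Phi> (rmP (lmP (iota k) x) a) = lmQ (iota k) (\<Phi> (rmP x a))" for k x
        using h2[of k "rmP x a"] Plr by simp
      moreover have "\<Phi> (rmP (x + y) a) = \<Phi> (rmP x a) + \<Phi> (rmP y a)" for x y
        using h1 Pr by simp
      ultimately show ?thesis unfolding HomK_def by simp
    qed
  next
    show "(\<lambda>\<Phi> p. \<Phi> (rmP p a)) (hom_lmul lmQ b \<Phi>) = hom_lmul lmQ b ((\<lambda>\<Phi> p. \<Phi> (rmP p a)) \<Phi>)" for \<Phi> b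
      unfolding hom_lmul_def by simp
  qed (rule K P Q refl)+
  have 3: "(\<lambda>p. rmQ (\<Phi> p) a) \<in> diff_ops iota lmP lmQ r" by (rule R.main[OF assms(4)])
  have 4: "(\<lambda>p. \<Phi> (rmP p a)) \<in> diff_ops iota lmP lmQ r" by (rule B.main[OF assms(4)])
  show ?thesis using 12 3 4 by (simp only: simp_thms)
qed

end
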